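(* Let $q$ be odd, $q\ne9$, and $V$ an $n$-dimensional space ($n\ge4$) over $\mathbb{F}_q$ with a non-degenerate alternating form $f$, $G=\mathrm{Sp}(V)$ and $\mathcal T$ the set of transvections of $G$. Let $X\subseteq G$ be a generating set of $G$ consisting of $1$ and transvections, which is $\mathbb{F}_q$-closed, such that ${}_VX$ spans $V$, $X_{V^*}$ spans $V^*$, $\Gamma(X)$ is strongly connected, and the directed diameter of $\Gamma(X'')$ is at most $2$ for every $X\setminus\{1\}\subseteq X''\subseteq\mathcal T$. Let $c\ge1$ be an absolute constant such that for every such $V,X$ and all nonzero $a,b\in V$ with $T_a\cup T_b\subseteq X$ and $a+b\ne0$ one has $\ell_X(T_{a+b})\le c$ (such a constant exists). Then $\ell_X(\mathcal T)\le c\,n^{\log_2 c}$. Moreover, $\ell_X(\mathcal T)\le 21n^{4.4}$.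
   Context: Transvections $s=1+u\otimes\phi$ ($x\mapsto x+\phi(x)u$, $\phi(u)=0$); $s^\lambda=1+\lambda u\otimes\phi$; $X$ is $\mathbb{F}_q$-closed if $s^\lambda\in X$ for all $s\in X$, $\lambda\in\mathbb{F}_q^\times$. ${}_VX$, $X_{V^*}$: the sets of $u$, resp. $\phi$, occurring in elements of $X$. $\Gamma(Y)$: directed graph on $Y$ with an edge from $1+u\otimes\phi$ to $1+v\otimes\psi$ iff $\psi(u)\ne0$. For $0\ne v\in V$, $\varphi_v(x)=f(v,x)$ and $T_v=\{1+\lambda v\otimes\varphi_v:\lambda\in\mathbb{F}_q\}$. $\ell_X(Y)=\min\{k:Y\subseteq(X\cup X^{-1}\cup\{1\})^k\}$. *)

theory Defs
  imports "HOL-Analysis.Analysis" "Jordan_Normal_Form.VS_Connect"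
begin

text \<open>The space V is F_q^n (column vectors of dimension n), the alternating form is
  f(x,y) = x . (J y) for an n x n matrix J.
  A linear functional phi is represented by a vector phi, acting as x |-> phi . x.\<close>

definition alternating_form :: "nat \<Rightarrow> 'a::field mat \<Rightarrow> bool" where
  "alternating_form n J \<longleftrightarrow> J \<in> carrier_mat n n \<and>
     (\<forall>x \<in> carrier_vec n. x \<bullet> (J *\<^sub>v x) = 0)"

definition nondegenerate_form :: "nat \<Rightarrow> 'a::field mat \<Rightarrow> bool" where
  "nondegenerate_form n J \<longleftrightarrow> J \<in> carrier_mat n n \<and>
     (\<forall>x \<in> carrier_vec n. (\<forall>y \<in> carrier_vec n. x \<bullet> (J *\<^sub>v y) = 0) \<longrightarrow> x = 0\<^sub>v n)"

definition Sp :: "nat \<Rightarrow> 'a::field mat \<Rightarrow> 'a mat set" where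
  "Sp n J = {A \<in> carrier_mat n n. invertible_mat A \<and>
     (\<forall>x \<in> carrier_vec n. \<forall>y \<in> carrier_vec n.
        (A *\<^sub>v x) \<bullet> (J *\<^sub>v (A *\<^sub>v y)) = x \<bullet> (J *\<^sub>v y))}"

definition tv :: "nat \<Rightarrow> 'a::field vec \<Rightarrow> 'a vec \<Rightarrow> 'a mat" where
  "tv n u phi = 1\<^sub>m n + mat n n (\<lambda>(i,j). u $ i * phi $ j)"

definition is_tv_rep :: "nat \<Rightarrow> 'a::field mat \<Rightarrow> 'a vec \<Rightarrow> 'a vec \<Rightarrow> bool" where
  "is_tv_rep n s u phi \<longleftrightarrow> u \<in> carrier_vec n \<and> phi \<in> carrier_vec n \<and>
     u \<noteq> 0\<^sub>v n \<and> phi \<noteq> 0\<^sub>v n \<and> phi \<bullet> u = 0 \<and> s = tv n u phi"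

definition transvections :: "nat \<Rightarrow> 'a::field mat \<Rightarrow> 'a mat set" where
  "transvections n J = {s \<in> Sp n J. \<exists>u phi. is_tv_rep n s u phi}"

definition V_part :: "nat \<Rightarrow> 'a::field mat set \<Rightarrow> 'a vec set" where
  "V_part n X = {u. \<exists>s\<in>X. \<exists>phi. is_tv_rep n s u phi}"

definition Vdual_part :: "nat \<Rightarrow> 'a::field mat set \<Rightarrow> 'a vec set" where
  "Vdual_part n X = {phi. \<exists>s\<in>X. \<exists>u. is_tv_rep n s u phi}"

definition spans :: "nat \<Rightarrow> 'a::field vec set \<Rightarrow> bool" where
  "spans n S \<longleftrightarrow> module.span class_ring (module_vec TYPE('a) n) S = carrier_vec n"

definition Fq_closed :: "nat \<Rightarrow> 'a::field mat set \<Rightarrow> bool" where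
  "Fq_closed n X \<longleftrightarrow> (\<forall>s\<in>X. \<forall>u phi. is_tv_rep n s u phi \<longrightarrow>
     (\<forall>t::'a. t \<noteq> 0 \<longrightarrow> tv n (t \<cdot>\<^sub>v u) phi \<in> X))"

definition gamma_edge :: "nat \<Rightarrow> 'a::field mat \<Rightarrow> 'a mat \<Rightarrow> bool" where
  "gamma_edge n s t \<longleftrightarrow> (\<exists>u phi v psi. is_tv_rep n s u phi \<and> is_tv_rep n t v psi \<and> psi \<bullet> u \<noteq> 0)"

definition gamma_vertices :: "nat \<Rightarrow> 'a::field mat set \<Rightarrow> 'a mat set" where
  "gamma_vertices n Y = {s \<in> Y. \<exists>u phi. is_tv_rep n s u phi}"

definition strongly_connected_gamma :: "nat \<Rightarrow> 'a::field mat set \<Rightarrow> bool" where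
  "strongly_connected_gamma n Y \<longleftrightarrow>
     (\<forall>s \<in> gamma_vertices n Y. \<forall>t \<in> gamma_vertices n Y.
        (s, t) \<in> {(a, b). a \<in> gamma_vertices n Y \<and> b \<in> gamma_vertices n Y \<and> gamma_edge n a b}\<^sup>*)"

definition diam_le_2_gamma :: "nat \<Rightarrow> 'a::field mat set \<Rightarrow> bool" where
  "diam_le_2_gamma n Y \<longleftrightarrow>
     (\<forall>s \<in> gamma_vertices n Y. \<forall>t \<in> gamma_vertices n Y.
        s = t \<or> gamma_edge n s t \<or> (\<exists>w \<in> gamma_vertices n Y. gamma_edge n s w \<and> gamma_edge n w t))"

fun setpow :: "nat \<Rightarrow> 'a::field mat set \<Rightarrow> nat \<Rightarrow> 'a mat set" where
  "setpow n S 0 = {1\<^sub>m n}"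
| "setpow n S (Suc k) = {A * B | A B. A \<in> S \<and> B \<in> setpow n S k}"

definition inv_set :: "nat \<Rightarrow> 'a::field mat set \<Rightarrow> 'a mat set" where
  "inv_set n X = {B \<in> carrier_mat n n. \<exists>A \<in> X. A * B = 1\<^sub>m n \<and> B * A = 1\<^sub>m n}"

definition sym_gens :: "nat \<Rightarrow> 'a::field mat set \<Rightarrow> 'a mat set" where
  "sym_gens n X = X \<union> inv_set n X \<union> {1\<^sub>m n}"

definition generates :: "nat \<Rightarrow> 'a::field mat \<Rightarrow> 'a mat set \<Rightarrow> bool" where
  "generates n J X \<longleftrightarrow> Sp n J \<subseteq> (\<Union>k. setpow n (sym_gens n X) k)"

definition word_len :: "nat \<Rightarrow> 'a::field mat set \<Rightarrow> 'a mat set \<Rightarrow> nat" where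
  "word_len n X Y = (LEAST k. Y \<subseteq> setpow n (sym_gens n X) k)"

text \<open>T_v = {1 + lambda v (x) phi_v : lambda in F_q}, phi_v(x) = f(v,x) = (J^T v) . x.\<close>
definition T_set :: "nat \<Rightarrow> 'a::field mat \<Rightarrow> 'a vec \<Rightarrow> 'a mat set" where
  "T_set n J v = {tv n (t \<cdot>\<^sub>v v) (transpose_mat J *\<^sub>v v) | t. True}"

definition admissible :: "nat \<Rightarrow> 'a::field mat \<Rightarrow> 'a mat set \<Rightarrow> bool" where
  "admissible n J X \<longleftrightarrow>
     4 \<le> n \<and> alternating_form n J \<and> nondegenerate_form n J \<and>
     X \<subseteq> Sp n J \<and> 1\<^sub>m n \<in> X \<and> X - {1\<^sub>m n} \<subseteq> transvections n J \<and>
     generates n J X \<and> Fq_closed n X \<and>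
     spans n (V_part n X) \<and> spans n (Vdual_part n X) \<and>
     strongly_connected_gamma n X \<and>
     (\<forall>X''. X - {1\<^sub>m n} \<subseteq> X'' \<and> X'' \<subseteq> transvections n J \<longrightarrow> diam_le_2_gamma n X'')"

definition sum_hyp :: "'a::field itself \<Rightarrow> real \<Rightarrow> bool" where
  "sum_hyp TYPE('a) c \<longleftrightarrow>
     (\<forall>n (J::'a mat) X. admissible n J X \<longrightarrow>
        (\<forall>a \<in> carrier_vec n. \<forall>b \<in> carrier_vec n.
           a \<noteq> 0\<^sub>v n \<longrightarrow> b \<noteq> 0\<^sub>v n \<longrightarrow> a + b \<noteq> 0\<^sub>v n \<longrightarrow>
           T_set n J a \<union> T_set n J b \<subseteq> X \<longrightarrow>
           real (word_len n X (T_set n J (a + b))) \<le> c))"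

end

theory Submission
  imports Defs
begin
unbundle no vec_syntax
no_notation inner (infix "\<bullet>" 70)

lemma tv_carrier[simp]: "tv n u phi \<in> carrier_mat n n"
  by (simp add: tv_def)

lemma tv_dims[simp]: "dim_row (tv n u phi) = n" "dim_col (tv n u phi) = n"
  by (simp_all add: tv_def)

lemma tv_index: "i < n \<Longrightarrow> j < n \<Longrightarrow>
   tv n u phi $$ (i,j) = (if i = j then 1 else 0) + u $ i * phi $ j"
  by (simp add: tv_def)

lemma tv_action:
  fixes u :: "'a::field vec"
  assumes u: "u \<in> carrier_vec n" and p: "phi \<in> carrier_vec n" and x: "x \<in> carrier_vec n"
  shows "tv n u phi *\<^sub>v x = x + (phi \<bullet> x) \<cdot>\<^sub>v u"
proof (rule eq_vecI)
  show "dim_vec (tv n u phi *\<^sub>v x) = dim_vec (x + (phi \<bullet> x) \<cdot>\<^sub>v u)" using u x by simp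
  fix i assume "i < dim_vec (x + (phi \<bullet> x) \<cdot>\<^sub>v u)"
  hence i: "i < n" using u x by simp
  have "(tv n u phi *\<^sub>v x) $ i = row (tv n u phi) i \<bullet> x" using i by simp
  also have "\<dots> = (\<Sum>j\<in>{0..<n}. ((if i = j then 1 else 0) + u $ i * phi $ j) * x $ j)"
    unfolding scalar_prod_def using i x by (intro sum.cong) (auto simp: tv_index)
  also have "\<dots> = (\<Sum>j\<in>{0..<n}. (if i = j then 1 else 0) * x $ j) + u $ i * (\<Sum>j\<in>{0..<n}. phi $ j * x $ j)"
    by (simp add: distrib_right sum.distrib sum_distrib_left mult.assoc)
  also have "(\<Sum>j\<in>{0..<n}. (if i = j then 1 else 0) * x $ j) = (\<Sum>j\<in>{0..<n}. if i = j then x $ j else 0)"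
    by (intro sum.cong) auto
  also have "\<dots> = x $ i" using i by simp
  also have "(\<Sum>j\<in>{0..<n}. phi $ j * x $ j) = phi \<bullet> x" unfolding scalar_prod_def using x by simp
  finally show "(tv n u phi *\<^sub>v x) $ i = (x + (phi \<bullet> x) \<cdot>\<^sub>v u) $ i"
    using i u x by (simp add: mult.commute)
qed

lemma mat_eq_by_action:
  fixes A :: "'a::field mat"
  assumes A: "A \<in> carrier_mat n n" and B: "B \<in> carrier_mat n n"
    and eq: "\<And>x. x \<in> carrier_vec n \<Longrightarrow> A *\<^sub>v x = B *\<^sub>v x"
  shows "A = B"
proof (rule eq_matI)
  fix i j assume i: "i < dim_row B" and j: "j < dim_col B"
  hence i': "i < n" and j': "j < n" using B by auto
  have "A $$ (i,j) = (A *\<^sub>v unit_vec n j) $ i" using A i' j' by simp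
  also have "\<dots> = (B *\<^sub>v unit_vec n j) $ i" using eq[of "unit_vec n j"] by simp
  also have "\<dots> = B $$ (i,j)" using B i' j' by simp
  finally show "A $$ (i,j) = B $$ (i,j)" .
qed (use A B in auto)

lemma mult_action: "A \<in> carrier_mat n n \<Longrightarrow> B \<in> carrier_mat n n \<Longrightarrow> x \<in> carrier_vec n \<Longrightarrow>
  (A * B) *\<^sub>v x = A *\<^sub>v (B *\<^sub>v x)"
  by (rule assoc_mult_mat_vec) auto

lemma mult_carrier_nn[simp]: "A \<in> carrier_mat n n \<Longrightarrow> B \<in> carrier_mat n n \<Longrightarrow> A * B \<in> carrier_mat n n"
  by (rule mult_carrier_mat)


lemma nonzero_index: fixes u :: "'a::zero vec" assumes "u \<in> carrier_vec n" "u \<noteq> 0\<^sub>v n" shows "\<exists>i<n. u $ i \<noteq> 0"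
  using assms by (metis carrier_vecD eq_vecI index_zero_vec(1) index_zero_vec(2))

lemma tv_entry_eq: fixes u :: "'a::field vec" assumes "tv n u phi = tv n u' phi'" "i < n" "j < n"
  shows "u $ i * phi $ j = u' $ i * phi' $ j"
proof -
  have "tv n u phi $$ (i,j) = tv n u' phi' $$ (i,j)" using assms by simp
  thus ?thesis using tv_index[of i n j u phi] tv_index[of i n j u' phi'] assms(2,3) by simp
qed

lemma tv_not_one: fixes u :: "'a::field vec" assumes "is_tv_rep n (1\<^sub>m n) u phi" shows False
proof -
  from assms have u: "u \<in> carrier_vec n" "u \<noteq> 0\<^sub>v n" and p: "phi \<in> carrier_vec n" "phi \<noteq> 0\<^sub>v n"
    and e: "1\<^sub>m n = tv n u phi" unfolding is_tv_rep_def by auto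
  obtain i where i: "i < n" "u $ i \<noteq> 0" using nonzero_index[OF u] by blast
  obtain j where j: "j < n" "phi $ j \<noteq> 0" using nonzero_index[OF p] by blast
  have "1\<^sub>m n $$ (i,j) = tv n u phi $$ (i,j)" using e by simp
  hence "(if i = j then 1 else 0) = (if i = j then 1 else 0) + u $ i * phi $ j" using i j by (simp add: tv_index)
  thus False using i j by simp
qed

lemma tv_scale_eq: fixes u :: "'a::field vec" assumes e: "tv n u phi = tv n u' phi'"
  and c: "u \<in> carrier_vec n" "u' \<in> carrier_vec n" "phi \<in> carrier_vec n" "phi' \<in> carrier_vec n"
  shows "tv n (t \<cdot>\<^sub>v u) phi = tv n (t \<cdot>\<^sub>v u') phi'"
proof (rule eq_matI)
  fix i j assume "i < dim_row (tv n (t \<cdot>\<^sub>v u') phi')" "j < dim_col (tv n (t \<cdot>\<^sub>v u') phi')"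
  hence ij: "i < n" "j < n" by auto
  have "u $ i * phi $ j = u' $ i * phi' $ j" using tv_entry_eq[OF e ij] .
  thus "tv n (t \<cdot>\<^sub>v u) phi $$ (i, j) = tv n (t \<cdot>\<^sub>v u') phi' $$ (i, j)"
    using ij c by (simp add: tv_index mult.assoc)
qed auto

lemma smult_eq_zero_vec: fixes a :: "'a::field vec"
  assumes "a \<in> carrier_vec n" "\<sigma> \<noteq> 0" "\<sigma> \<cdot>\<^sub>v a = 0\<^sub>v n" shows "a = 0\<^sub>v n"
proof (rule eq_vecI)
  fix i assume "i < dim_vec (0\<^sub>v n :: 'a vec)"
  hence i: "i < n" by simp
  have "(\<sigma> \<cdot>\<^sub>v a) $ i = 0" using assms(3) i by simp
  hence "\<sigma> * a $ i = 0" using assms(1) i by simp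
  thus "a $ i = 0\<^sub>v n $ i" using assms(2) i by simp
qed (use assms in simp)


lemma setpow_carrier: assumes "S \<subseteq> carrier_mat n n" shows "setpow n S k \<subseteq> carrier_mat n n"
proof (induction k)
  case (Suc k)
  show ?case
  proof
    fix C assume "C \<in> setpow n S (Suc k)"
    then obtain A B where "C = A * B" "A \<in> S" "B \<in> setpow n S k" by auto
    thus "C \<in> carrier_mat n n" using Suc assms mult_carrier_nn by blast
  qed
qed simp

lemma setpow_mult: assumes S: "S \<subseteq> carrier_mat n n"
  shows "A \<in> setpow n S a \<Longrightarrow> B \<in> setpow n S b \<Longrightarrow> A * B \<in> setpow n S (a + b)"
proof (induction a arbitrary: A)
  case 0
  hence "A = 1\<^sub>m n" by simp
  moreover have "B \<in> carrier_mat n n" using setpow_carrier[OF S] 0 by blast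
  ultimately show ?case using 0 by simp
next
  case (Suc a)
  then obtain A1 A2 where A: "A = A1 * A2" "A1 \<in> S" "A2 \<in> setpow n S a" by auto
  have c: "A1 \<in> carrier_mat n n" "A2 \<in> carrier_mat n n" "B \<in> carrier_mat n n"
    using A S setpow_carrier[OF S] Suc.prems by blast+
  have "A * B = A1 * (A2 * B)" using A c by simp
  moreover have "A2 * B \<in> setpow n S (a + b)" using Suc.IH A Suc.prems by blast
  ultimately show ?case using A by auto
qed

lemma setpow_mono: assumes S: "S \<subseteq> carrier_mat n n" and one: "1\<^sub>m n \<in> S" and ab: "a \<le> b"
  shows "setpow n S a \<subseteq> setpow n S b"
proof
  fix A assume A: "A \<in> setpow n S a"
  have "1\<^sub>m n \<in> setpow n S k" for k
  proof (induction k)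
    case (Suc k)
    thus ?case using one by (auto intro!: exI[of _ "1\<^sub>m n"])
  qed simp
  hence "1\<^sub>m n \<in> setpow n S (b - a)" .
  hence "1\<^sub>m n * A \<in> setpow n S (b - a + a)" using setpow_mult[OF S] A by blast
  moreover have "A \<in> carrier_mat n n" using setpow_carrier[OF S] A by blast
  ultimately show "A \<in> setpow n S b" using ab by simp
qed

lemma setpow_mono_set: "S \<subseteq> S' \<Longrightarrow> setpow n S k \<subseteq> setpow n S' k"
  by (induction k) auto

lemma setpow_one: assumes S: "S \<subseteq> carrier_mat n n" shows "S \<subseteq> setpow n S 1"
proof
  fix A assume "A \<in> S"
  moreover hence "A = A * 1\<^sub>m n" using S by auto
  ultimately show "A \<in> setpow n S 1" by fastforce
qed

lemma setpow_subst: assumes S: "S \<subseteq> carrier_mat n n" and S': "S' \<subseteq> setpow n S L"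
  shows "setpow n S' k \<subseteq> setpow n S (k * L)"
proof (induction k)
  case 0 thus ?case by simp
next
  case (Suc k)
  show ?case
  proof
    fix A assume "A \<in> setpow n S' (Suc k)"
    then obtain A1 A2 where A: "A = A1 * A2" "A1 \<in> S'" "A2 \<in> setpow n S' k" by auto
    have "A1 * A2 \<in> setpow n S (L + k * L)" using setpow_mult[OF S] A S' Suc by blast
    thus "A \<in> setpow n S (Suc k * L)" using A by simp
  qed
qed

lemma sym_gens_carrier: "X \<subseteq> carrier_mat n n \<Longrightarrow> sym_gens n X \<subseteq> carrier_mat n n"
  unfolding sym_gens_def inv_set_def by auto

lemma sym_gens_one: "1\<^sub>m n \<in> sym_gens n X"
  unfolding sym_gens_def by auto

lemma sym_gens_mono: "X \<subseteq> X' \<Longrightarrow> sym_gens n X \<subseteq> sym_gens n X'"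
  unfolding sym_gens_def inv_set_def by blast

lemma word_len_le: "Y \<subseteq> setpow n (sym_gens n X) k \<Longrightarrow> word_len n X Y \<le> k"
  unfolding word_len_def by (rule Least_le)

lemma word_len_ex: "Y \<subseteq> setpow n (sym_gens n X) k \<Longrightarrow> Y \<subseteq> setpow n (sym_gens n X) (word_len n X Y)"
  unfolding word_len_def by (rule LeastI)

lemma finite_exists_len:
  assumes X: "X \<subseteq> carrier_mat n n" and g: "generates n J X" and Y: "finite Y" "Y \<subseteq> Sp n J"
  shows "\<exists>k. Y \<subseteq> setpow n (sym_gens n X) k"
  using Y
proof (induction Y rule: finite_induct)
  case empty thus ?case by auto
next
  case (insert y Y)
  then obtain k where k: "Y \<subseteq> setpow n (sym_gens n X) k" by auto
  from insert.prems g obtain k' where k': "y \<in> setpow n (sym_gens n X) k'" unfolding generates_def by blast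
  have c: "sym_gens n X \<subseteq> carrier_mat n n" using sym_gens_carrier[OF X] .
  have "Y \<subseteq> setpow n (sym_gens n X) (max k k')" using setpow_mono[OF c sym_gens_one, of k "max k k'"] k by auto
  moreover have "y \<in> setpow n (sym_gens n X) (max k k')" using setpow_mono[OF c sym_gens_one, of k' "max k k'"] k' by auto
  ultimately show ?case by blast
qed


lemma choose_nonzero: fixes A B :: "'a::field"
  assumes c3: "\<forall>x y::'a. \<exists>z. z \<noteq> x \<and> z \<noteq> y" and A: "A \<noteq> 0"
  shows "\<exists>\<mu>. \<mu> \<noteq> 0 \<and> A + \<mu> * B \<noteq> 0"
proof -
  obtain \<mu> where mu: "\<mu> \<noteq> 0" "\<mu> \<noteq> - A / B" using c3 by blast
  have "A + \<mu> * B \<noteq> 0"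
  proof (cases "B = 0")
    case True thus ?thesis using A by simp
  next
    case False
    show ?thesis
    proof
      assume "A + \<mu> * B = 0"
      hence "\<mu> = - A / B" using False by (simp add: field_simps add_eq_0_iff)
      thus False using mu by simp
    qed
  qed
  thus ?thesis using mu by blast
qed


context vec_space begin

lemma span_empty_vec: "v \<in> span {} \<Longrightarrow> v = 0\<^sub>v n"
  using span_empty by simp

lemma span_single: assumes b: "b \<in> carrier_vec n" and v: "v \<in> span {b}" shows "\<exists>c. v = c \<cdot>\<^sub>v b"
proof -
  from v obtain a where v: "v = lincomb a {b}" using finite_span[of "{b}"] b by auto
  have "v = a b \<cdot>\<^sub>v b"
  proof (rule eq_vecI)
    fix i assume "i < dim_vec (a b \<cdot>\<^sub>v b)"
    hence i: "i < n" using b by simp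
    show "v $ i = (a b \<cdot>\<^sub>v b) $ i" unfolding v using lincomb_index[OF i, of "{b}" a] b i by simp
  qed (use v b lincomb_closed[of "{b}" a] in auto)
  thus ?thesis by blast
qed

lemma span_split: assumes f: "finite B1" "finite B2" and d: "B1 \<inter> B2 = {}"
  and c: "B1 \<union> B2 \<subseteq> carrier_vec n" and v: "v \<in> span (B1 \<union> B2)"
  shows "\<exists>v1 \<in> span B1. \<exists>v2 \<in> span B2. v = v1 + v2"
proof -
  from v obtain a where v: "v = lincomb a (B1 \<union> B2)" using finite_span[of "B1 \<union> B2"] f c by auto
  have "v = lincomb a B1 + lincomb a B2" unfolding v using lincomb_union[of B1 B2 a] f c d by auto
  moreover have "lincomb a B1 \<in> span B1" using finite_span[of B1] f c by auto
  moreover have "lincomb a B2 \<in> span B2" using finite_span[of B2] f c by auto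
  ultimately show ?thesis by blast
qed

lemma span_small: assumes A: "A \<subseteq> carrier_vec n" and u: "u \<in> span A"
  shows "\<exists>B \<subseteq> A. finite B \<and> card B \<le> n \<and> u \<in> span B"
proof -
  let ?P = "\<lambda>B. B \<subseteq> A \<and> finite B \<and> u \<in> span B"
  from u obtain a B0 where B0: "u = lincomb a B0" "finite B0" "B0 \<subseteq> A" unfolding span_def by auto
  have "u \<in> span B0" using B0 unfolding span_def by auto
  hence "?P B0" using B0 by auto
  then obtain B where B: "?P B" and min: "\<And>B'. ?P B' \<Longrightarrow> card B \<le> card B'"
    using ex_has_least_nat[of ?P B0 card] by blast
  have Bc: "B \<subseteq> carrier_vec n" using B A by auto
  have li: "lin_indpt B"
  proof
    assume "lin_dep B"
    then obtain A' c v where A': "finite A'" "A' \<subseteq> B" "lincomb c A' = 0\<^sub>v n" "v \<in> A'" "c v \<noteq> 0"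
      unfolding lin_dep_def by auto
    have "v \<in> span (A' - {v})" using lincomb_isolate(2)[of A' c v] A' Bc by auto
    hence "v \<in> span (B - {v})" using span_is_monotone[of "A' - {v}" "B - {v}"] A' by auto
    hence "span (B - {v}) = span ((B - {v}) \<union> {v})" using already_in_span[of "B - {v}" v] Bc by auto
    also have "(B - {v}) \<union> {v} = B" using A' by auto
    finally have "u \<in> span (B - {v})" using B by auto
    hence "?P (B - {v})" using B by auto
    hence "card B \<le> card (B - {v})" using min by blast
    moreover have "card (B - {v}) < card B" using A' B by (meson card_Diff1_less subsetD)
    ultimately show False by simp
  qed
  have "card B \<le> dim" using li_le_dim(2)[OF fin_dim Bc li] .
  thus ?thesis using B dim_is_n by auto
qed

end

lemma spans_mono: fixes S :: "'a::field vec set"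
  assumes s: "spans n S" and sub: "S \<subseteq> S'" and c: "S' \<subseteq> carrier_vec n" shows "spans n S'"
proof -
  interpret vs: vec_space "TYPE('a)" n .
  have "vs.span S \<subseteq> vs.span S'" using vs.span_is_monotone[OF sub] .
  moreover have "vs.span S' \<subseteq> carrier_vec n" using vs.span_is_subset2[OF c] by simp
  ultimately show ?thesis using s unfolding spans_def by auto
qed

lemma diam_strong: assumes d: "diam_le_2_gamma n Y" and e: "gamma_vertices n Y' = gamma_vertices n Y"
  shows "strongly_connected_gamma n Y'"
  unfolding strongly_connected_gamma_def e
proof (intro ballI)
  fix s t assume s: "s \<in> gamma_vertices n Y" and t: "t \<in> gamma_vertices n Y"
  let ?R = "{(a, b). a \<in> gamma_vertices n Y \<and> b \<in> gamma_vertices n Y \<and> gamma_edge n a b}"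
  from d s t have "s = t \<or> gamma_edge n s t \<or> (\<exists>w \<in> gamma_vertices n Y. gamma_edge n s w \<and> gamma_edge n w t)"
    unfolding diam_le_2_gamma_def by blast
  thus "(s, t) \<in> ?R\<^sup>*"
  proof (elim disjE)
    assume "s = t" thus ?thesis by simp
  next
    assume "gamma_edge n s t" thus ?thesis using s t by (intro r_into_rtrancl) simp
  next
    assume "\<exists>w \<in> gamma_vertices n Y. gamma_edge n s w \<and> gamma_edge n w t"
    then obtain w where w: "w \<in> gamma_vertices n Y" "gamma_edge n s w" "gamma_edge n w t" by blast
    have "(s, w) \<in> ?R" "(w, t) \<in> ?R" using w s t by auto
    thus ?thesis by (meson converse_rtrancl_into_rtrancl r_into_rtrancl)
  qed
qed

lemma gamma_vertices_minus_one: "gamma_vertices n (Y - {1\<^sub>m n}) = gamma_vertices n Y"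
  unfolding gamma_vertices_def using tv_not_one by blast


locale sform =
  fixes n :: nat and J :: "'a::field mat"
  assumes alt: "alternating_form n J" and nd: "nondegenerate_form n J"
begin

definition ff :: "'a vec \<Rightarrow> 'a vec \<Rightarrow> 'a" where "ff a b = a \<bullet> (J *\<^sub>v b)"
definition xx :: "'a vec \<Rightarrow> 'a \<Rightarrow> 'a mat" where
  "xx v t = tv n (t \<cdot>\<^sub>v v) (transpose_mat J *\<^sub>v v)"

lemma J_carrier[simp]: "J \<in> carrier_mat n n"
  using alt by (simp add: alternating_form_def)

lemma J_mult_carrier[simp]: "v \<in> carrier_vec n \<Longrightarrow> J *\<^sub>v v \<in> carrier_vec n"
  using mult_mat_vec_carrier[OF J_carrier] by blast

lemma JT_carrier[simp]: "v \<in> carrier_vec n \<Longrightarrow> transpose_mat J *\<^sub>v v \<in> carrier_vec n"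
  using mult_mat_vec_carrier[OF transpose_carrier_mat[THEN iffD2, OF J_carrier]] by blast

lemma ff_add_left[simp]: "a \<in> carrier_vec n \<Longrightarrow> b \<in> carrier_vec n \<Longrightarrow> c \<in> carrier_vec n \<Longrightarrow>
  ff (a + b) c = ff a c + ff b c"
  unfolding ff_def by (rule add_scalar_prod_distrib[of _ n]) auto

lemma ff_add_right[simp]: "a \<in> carrier_vec n \<Longrightarrow> b \<in> carrier_vec n \<Longrightarrow> c \<in> carrier_vec n \<Longrightarrow>
  ff a (b + c) = ff a b + ff a c"
  unfolding ff_def by (simp add: mult_add_distrib_mat_vec[OF J_carrier] scalar_prod_add_distrib[of _ n])

lemma ff_smult_left[simp]: "a \<in> carrier_vec n \<Longrightarrow> b \<in> carrier_vec n \<Longrightarrow> ff (k \<cdot>\<^sub>v a) b = k * ff a b"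
  unfolding ff_def by (rule smult_scalar_prod_distrib[of _ n]) auto

lemma ff_smult_right[simp]: "a \<in> carrier_vec n \<Longrightarrow> b \<in> carrier_vec n \<Longrightarrow> ff a (k \<cdot>\<^sub>v b) = k * ff a b"
  unfolding ff_def by (simp add: mult_mat_vec[OF J_carrier] scalar_prod_smult_distrib[of _ n])

lemma ff_self[simp]: "a \<in> carrier_vec n \<Longrightarrow> ff a a = 0"
  using alt unfolding alternating_form_def ff_def by auto

lemma ff_skew: assumes "a \<in> carrier_vec n" "b \<in> carrier_vec n" shows "ff a b = - ff b a"
proof -
  have ab: "a + b \<in> carrier_vec n" using assms by simp
  have "ff (a + b) (a + b) = ff a (a + b) + ff b (a + b)" using ff_add_left[OF assms ab] .
  also have "\<dots> = ff a b + ff b a" using assms by simp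
  finally have "0 = ff a b + ff b a" using ff_self[OF ab] by simp
  thus ?thesis by (metis add.commute neg_eq_iff_add_eq_0)
qed

lemma ff_skew_neq: "a \<in> carrier_vec n \<Longrightarrow> b \<in> carrier_vec n \<Longrightarrow> ff a b \<noteq> 0 \<longleftrightarrow> ff b a \<noteq> 0"
  using ff_skew[of a b] by auto


lemma JT_scalar: "v \<in> carrier_vec n \<Longrightarrow> x \<in> carrier_vec n \<Longrightarrow> (transpose_mat J *\<^sub>v v) \<bullet> x = ff v x"
  unfolding ff_def by (rule transpose_vec_mult_scalar) auto

lemma nondeg_left: "v \<in> carrier_vec n \<Longrightarrow> v \<noteq> 0\<^sub>v n \<Longrightarrow> \<exists>y\<in>carrier_vec n. ff v y \<noteq> 0"
  using nd unfolding nondegenerate_form_def ff_def by blast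

lemma JT_nonzero: assumes v: "v \<in> carrier_vec n" "v \<noteq> 0\<^sub>v n" shows "transpose_mat J *\<^sub>v v \<noteq> 0\<^sub>v n"
proof
  assume z: "transpose_mat J *\<^sub>v v = 0\<^sub>v n"
  obtain y where y: "y \<in> carrier_vec n" "ff v y \<noteq> 0" using nondeg_left[OF v] by blast
  have "ff v y = (transpose_mat J *\<^sub>v v) \<bullet> y" using JT_scalar v y by simp
  also have "\<dots> = 0" using z y by simp
  finally show False using y by simp
qed

lemma xx_carrier[simp]: "xx v t \<in> carrier_mat n n"
  by (simp add: xx_def)

lemma xx_action: assumes v: "v \<in> carrier_vec n" and x: "x \<in> carrier_vec n"
  shows "xx v t *\<^sub>v x = x + (t * ff v x) \<cdot>\<^sub>v v"
proof -
  have "xx v t *\<^sub>v x = x + ((transpose_mat J *\<^sub>v v) \<bullet> x) \<cdot>\<^sub>v (t \<cdot>\<^sub>v v)"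
    unfolding xx_def by (rule tv_action) (use v x in auto)
  also have "\<dots> = x + (t * ff v x) \<cdot>\<^sub>v v"
    using v x by (simp add: JT_scalar smult_smult_assoc mult.commute)
  finally show ?thesis .
qed


lemma xx_dims[simp]: "dim_row (xx v t) = n" "dim_col (xx v t) = n"
  by (simp_all add: xx_def)

lemma xx_eqI: fixes A B :: "'a mat" assumes "\<And>x. x \<in> carrier_vec n \<Longrightarrow> A *\<^sub>v x = B *\<^sub>v x"
  and "A \<in> carrier_mat n n" "B \<in> carrier_mat n n" shows "A = B"
  by (rule mat_eq_by_action[OF assms(2,3) assms(1)])

lemma xx_zero[simp]: "v \<in> carrier_vec n \<Longrightarrow> xx v 0 = 1\<^sub>m n"
  by (rule xx_eqI) (auto simp: xx_action intro!: eq_vecI)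

lemma xx_add: assumes v: "v \<in> carrier_vec n" shows "xx v s * xx v t = xx v (s + t)"
proof (rule xx_eqI)
  fix x :: "'a vec" assume x: "x \<in> carrier_vec n"
  show "(xx v s * xx v t) *\<^sub>v x = xx v (s + t) *\<^sub>v x"
    using v x by (simp add: mult_action[of _ n] xx_action[OF v]) (intro eq_vecI, auto simp: algebra_simps)
qed (auto intro!: mult_carrier_mat[of _ n n _ n])

lemma xx_conj: assumes v: "v \<in> carrier_vec n" and z: "z \<in> carrier_vec n"
  shows "xx z r * xx v t * xx z (-r) = xx (v + (r * ff z v) \<cdot>\<^sub>v z) t"
proof (rule xx_eqI)
  fix x :: "'a vec" assume x: "x \<in> carrier_vec n"
  have sk: "ff v z = - ff z v" using ff_skew[OF v z] .
  show "(xx z r * xx v t * xx z (-r)) *\<^sub>v x = xx (v + (r * ff z v) \<cdot>\<^sub>v z) t *\<^sub>v x"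
    using v x z by (simp add: mult_action[of _ n] xx_action sk) (intro eq_vecI, auto simp: algebra_simps)
qed (auto intro!: mult_carrier_mat[of _ n n _ n])

lemma xx_Sp: assumes v: "v \<in> carrier_vec n" shows "xx v t \<in> Sp n J"
proof -
  have inv: "invertible_mat (xx v t)"
    unfolding invertible_mat_def inverts_mat_def
    using xx_add[OF v, of t "-t"] xx_add[OF v, of "-t" t] v
    by (intro conjI exI[of _ "xx v (-t)"]) (auto simp: square_mat.simps)
  have pres: "(xx v t *\<^sub>v x) \<bullet> (J *\<^sub>v (xx v t *\<^sub>v y)) = x \<bullet> (J *\<^sub>v y)"
    if x: "x \<in> carrier_vec n" and y: "y \<in> carrier_vec n" for x y
  proof -
    have sk: "ff x v = - ff v x" using ff_skew[OF x v] .
    have "(xx v t *\<^sub>v x) \<bullet> (J *\<^sub>v (xx v t *\<^sub>v y)) = ff (xx v t *\<^sub>v x) (xx v t *\<^sub>v y)"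
      by (simp add: ff_def)
    also have "\<dots> = ff x y" using x y v by (simp add: xx_action sk algebra_simps)
    finally show ?thesis by (simp add: ff_def)
  qed
  show ?thesis unfolding Sp_def using inv pres by auto
qed

lemma xx_scale: assumes v: "v \<in> carrier_vec n" shows "xx (\<mu> \<cdot>\<^sub>v v) t = xx v (t * \<mu> * \<mu>)"
proof (rule xx_eqI)
  fix x :: "'a vec" assume x: "x \<in> carrier_vec n"
  show "xx (\<mu> \<cdot>\<^sub>v v) t *\<^sub>v x = xx v (t * \<mu> * \<mu>) *\<^sub>v x"
    using v x by (simp add: xx_action) (intro eq_vecI, auto simp: algebra_simps)
qed auto

lemma T_set_eq: "T_set n J v = range (xx v)"
  unfolding T_set_def xx_def by auto

lemma T_scale: assumes v: "v \<in> carrier_vec n" and mu: "\<mu> \<noteq> 0"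
  shows "T_set n J (\<mu> \<cdot>\<^sub>v v) = T_set n J v"
proof -
  have "xx v t = xx (\<mu> \<cdot>\<^sub>v v) (t / (\<mu> * \<mu>))" for t
    using mu by (simp add: xx_scale[OF v])
  hence "xx v t \<in> range (xx (\<mu> \<cdot>\<^sub>v v))" for t by (metis rangeI)
  moreover have "xx (\<mu> \<cdot>\<^sub>v v) t \<in> range (xx v)" for t using xx_scale[OF v] by simp
  ultimately show ?thesis unfolding T_set_eq by blast
qed




lemma J_dims[simp]: "dim_row J = n" "dim_col J = n" using J_carrier unfolding carrier_mat_def by auto

lemma xx_rep: assumes a: "a \<in> carrier_vec n" "a \<noteq> 0\<^sub>v n" and s: "\<sigma> \<noteq> 0"
  shows "is_tv_rep n (xx a \<sigma>) (\<sigma> \<cdot>\<^sub>v a) (transpose_mat J *\<^sub>v a)"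
proof -
  have "\<sigma> \<cdot>\<^sub>v a \<noteq> 0\<^sub>v n"
    using smult_eq_zero_vec[OF a(1) s] a(2) by blast
  thus ?thesis unfolding is_tv_rep_def xx_def using a JT_nonzero[OF a] JT_scalar[OF a(1)]
    by simp
qed

lemma rep_of_xx: assumes a: "a \<in> carrier_vec n" and r: "is_tv_rep n (xx a \<sigma>) u phi"
  shows "\<exists>c. u = c \<cdot>\<^sub>v a" "\<exists>d. phi = d \<cdot>\<^sub>v (transpose_mat J *\<^sub>v a)"
proof -
  let ?w = "transpose_mat J *\<^sub>v a"
  from r have u: "u \<in> carrier_vec n" "u \<noteq> 0\<^sub>v n" and p: "phi \<in> carrier_vec n" "phi \<noteq> 0\<^sub>v n"
    and e: "tv n u phi = tv n (\<sigma> \<cdot>\<^sub>v a) ?w" unfolding is_tv_rep_def xx_def by auto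
  have ent: "u $ i * phi $ j = \<sigma> * a $ i * ?w $ j" if "i < n" "j < n" for i j
    using tv_entry_eq[OF e that] that a by simp
  obtain i0 where i0: "i0 < n" "u $ i0 \<noteq> 0" using nonzero_index[OF u] by blast
  obtain j0 where j0: "j0 < n" "phi $ j0 \<noteq> 0" using nonzero_index[OF p] by blast
  show "\<exists>c. u = c \<cdot>\<^sub>v a"
  proof (intro exI eq_vecI)
    fix i assume "i < dim_vec ((\<sigma> * ?w $ j0 / phi $ j0) \<cdot>\<^sub>v a)"
    hence i: "i < n" using a by simp
    have "u $ i * phi $ j0 = \<sigma> * a $ i * ?w $ j0" using ent[OF i j0(1)] .
    hence "u $ i = \<sigma> * a $ i * ?w $ j0 / phi $ j0" using j0 by (simp add: field_simps)
    thus "u $ i = ((\<sigma> * ?w $ j0 / phi $ j0) \<cdot>\<^sub>v a) $ i" using i a by simp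
  qed (use u a in simp)
  show "\<exists>d. phi = d \<cdot>\<^sub>v ?w"
  proof (intro exI eq_vecI)
    fix j assume "j < dim_vec ((\<sigma> * a $ i0 / u $ i0) \<cdot>\<^sub>v ?w)"
    hence j: "j < n" using a by simp
    have "u $ i0 * phi $ j = \<sigma> * a $ i0 * ?w $ j" using ent[OF i0(1) j] .
    hence "phi $ j = \<sigma> * a $ i0 * ?w $ j / u $ i0" using i0 by (simp add: field_simps)
    thus "phi $ j = ((\<sigma> * a $ i0 / u $ i0) \<cdot>\<^sub>v ?w) $ j" using j a by simp
  qed (use p a in simp)
qed

lemma edge_D: assumes a: "a \<in> carrier_vec n" and b: "b \<in> carrier_vec n"
  and e: "gamma_edge n (xx a \<sigma>) (xx b \<tau>)" shows "ff b a \<noteq> 0"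
proof -
  from e obtain u phi v psi where r1: "is_tv_rep n (xx a \<sigma>) u phi" and r2: "is_tv_rep n (xx b \<tau>) v psi"
    and ne: "psi \<bullet> u \<noteq> 0" unfolding gamma_edge_def by blast
  obtain c where c: "u = c \<cdot>\<^sub>v a" using rep_of_xx(1)[OF a r1] by blast
  obtain d where d: "psi = d \<cdot>\<^sub>v (transpose_mat J *\<^sub>v b)" using rep_of_xx(2)[OF b r2] by blast
  have "psi \<bullet> u = d * (c * ff b a)" using a b unfolding c d
    by (simp add: JT_scalar[symmetric] scalar_prod_smult_distrib[of _ n] smult_scalar_prod_distrib[of _ n])
  thus ?thesis using ne by auto
qed

lemma edge_I: assumes a: "a \<in> carrier_vec n" "a \<noteq> 0\<^sub>v n" and b: "b \<in> carrier_vec n" "b \<noteq> 0\<^sub>v n"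
  and s: "\<sigma> \<noteq> 0" "\<tau> \<noteq> 0" and f: "ff b a \<noteq> 0" shows "gamma_edge n (xx a \<sigma>) (xx b \<tau>)"
proof -
  have "(transpose_mat J *\<^sub>v b) \<bullet> (\<sigma> \<cdot>\<^sub>v a) \<noteq> 0"
    using JT_scalar[of b "\<sigma> \<cdot>\<^sub>v a"] a b s f by simp
  thus ?thesis unfolding gamma_edge_def using xx_rep[OF a s(1)] xx_rep[OF b s(2)] by blast
qed

lemma transvection_form: assumes s: "s \<in> Sp n J" and r: "is_tv_rep n s u phi"
  shows "\<exists>\<mu>. \<mu> \<noteq> 0 \<and> s = xx u \<mu>"
proof -
  from r have u: "u \<in> carrier_vec n" "u \<noteq> 0\<^sub>v n" and p: "phi \<in> carrier_vec n" "phi \<noteq> 0\<^sub>v n"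
    and pu: "phi \<bullet> u = 0" and e: "s = tv n u phi" unfolding is_tv_rep_def by auto
  have act: "s *\<^sub>v x = x + (phi \<bullet> x) \<cdot>\<^sub>v u" if "x \<in> carrier_vec n" for x
    using e tv_action[OF u(1) p(1) that] by simp
  have pres: "ff (s *\<^sub>v x) (s *\<^sub>v y) = ff x y" if "x \<in> carrier_vec n" "y \<in> carrier_vec n" for x y
    using s that unfolding Sp_def ff_def by auto
  have key: "(phi \<bullet> y) * ff x u + (phi \<bullet> x) * ff u y = 0" if x: "x \<in> carrier_vec n" and y: "y \<in> carrier_vec n" for x y
  proof -
    have "ff x y = ff (x + (phi \<bullet> x) \<cdot>\<^sub>v u) (y + (phi \<bullet> y) \<cdot>\<^sub>v u)" using pres[OF x y] act[OF x] act[OF y] by simp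
    also have "\<dots> = ff x y + (phi \<bullet> y) * ff x u + (phi \<bullet> x) * ff u y"
      using x y u by (simp add: algebra_simps)
    finally show ?thesis by simp
  qed
  obtain x0 where x0: "x0 \<in> carrier_vec n" "ff u x0 \<noteq> 0" using nondeg_left[OF u] by blast
  define \<beta> where "\<beta> = ff u x0"
  define \<mu> where "\<mu> = (phi \<bullet> x0) / \<beta>"
  have sk: "ff x0 u = - \<beta>" unfolding \<beta>_def using ff_skew[OF x0(1) u(1)] .
  have phiy: "phi \<bullet> y = \<mu> * ff u y" if y: "y \<in> carrier_vec n" for y
  proof -
    have "(phi \<bullet> y) * (- \<beta>) + (phi \<bullet> x0) * ff u y = 0" using key[OF x0(1) y] sk by simp
    thus ?thesis unfolding \<mu>_def using x0 \<beta>_def by (simp add: field_simps)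
  qed
  have phieq: "phi = \<mu> \<cdot>\<^sub>v (transpose_mat J *\<^sub>v u)"
  proof (rule eq_vecI)
    fix j assume "j < dim_vec (\<mu> \<cdot>\<^sub>v (transpose_mat J *\<^sub>v u))"
    hence j: "j < n" using u by simp
    have "phi $ j = phi \<bullet> unit_vec n j" using j p by simp
    also have "\<dots> = \<mu> * ff u (unit_vec n j)" using phiy[of "unit_vec n j"] j by simp
    also have "ff u (unit_vec n j) = (transpose_mat J *\<^sub>v u) \<bullet> unit_vec n j"
      using JT_scalar[OF u(1), of "unit_vec n j"] j by simp
    also have "\<dots> = (transpose_mat J *\<^sub>v u) $ j" using j by simp
    finally show "phi $ j = (\<mu> \<cdot>\<^sub>v (transpose_mat J *\<^sub>v u)) $ j" using j u by simp
  qed (use p u in simp)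
  have mu0: "\<mu> \<noteq> 0" using phieq p by auto
  have "s = xx u \<mu>"
  proof (rule eq_matI)
    fix i j assume "i < dim_row (xx u \<mu>)" "j < dim_col (xx u \<mu>)"
    hence ij: "i < n" "j < n" by auto
    show "s $$ (i,j) = xx u \<mu> $$ (i,j)" unfolding e xx_def using ij u phieq
      by (simp add: tv_index)
  qed (use e in auto)
  thus ?thesis using mu0 by blast
qed




lemma ADD:
  assumes X: "X \<subseteq> carrier_mat n n" and z: "z \<in> carrier_vec n" and v: "v \<in> carrier_vec n"
    and f: "ff z v \<noteq> 0"
    and cz: "T_set n J z \<subseteq> setpow n (sym_gens n X) k1"
    and cv: "T_set n J v \<subseteq> setpow n (sym_gens n X) k2"
  shows "T_set n J (v + \<kappa> \<cdot>\<^sub>v z) \<subseteq> setpow n (sym_gens n X) (k1 + k2 + k1)"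
proof
  fix A assume "A \<in> T_set n J (v + \<kappa> \<cdot>\<^sub>v z)"
  then obtain t where A: "A = xx (v + \<kappa> \<cdot>\<^sub>v z) t" unfolding T_set_eq by auto
  define r where "r = \<kappa> / ff z v"
  have rk: "r * ff z v = \<kappa>" unfolding r_def using f by simp
  have eq: "A = xx z r * xx v t * xx z (-r)" using xx_conj[OF v z, of r t] rk A by simp
  have c: "sym_gens n X \<subseteq> carrier_mat n n" using sym_gens_carrier[OF X] .
  have "xx z r \<in> setpow n (sym_gens n X) k1" "xx z (-r) \<in> setpow n (sym_gens n X) k1"
    "xx v t \<in> setpow n (sym_gens n X) k2" using cz cv unfolding T_set_eq by auto
  hence "xx z r * xx v t * xx z (-r) \<in> setpow n (sym_gens n X) (k1 + k2 + k1)"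
    using setpow_mult[OF c] by blast
  thus "A \<in> setpow n (sym_gens n X) (k1 + k2 + k1)" using eq by simp
qed




lemma trans_form: assumes "s \<in> transvections n J"
  shows "\<exists>u \<mu>. u \<in> carrier_vec n \<and> u \<noteq> 0\<^sub>v n \<and> \<mu> \<noteq> 0 \<and> s = xx u \<mu> \<and> (\<exists>phi. is_tv_rep n s u phi)"
proof -
  from assms obtain u phi where s: "s \<in> Sp n J" "is_tv_rep n s u phi" unfolding transvections_def by blast
  then obtain \<mu> where "\<mu> \<noteq> 0" "s = xx u \<mu>" using transvection_form by blast
  thus ?thesis using s unfolding is_tv_rep_def by blast
qed

lemma xx_transvection: assumes "u \<in> carrier_vec n" "u \<noteq> 0\<^sub>v n" "\<mu> \<noteq> 0"
  shows "xx u \<mu> \<in> transvections n J"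
  unfolding transvections_def using xx_Sp[OF assms(1)] xx_rep[OF assms] by blast

lemma X_core: assumes adm: "admissible n J X" and s: "s \<in> X" "s = xx u \<mu>"
  and u: "u \<in> carrier_vec n" "u \<noteq> 0\<^sub>v n" and mu: "\<mu> \<noteq> 0"
  shows "T_set n J u \<subseteq> X"
proof
  fix A assume "A \<in> T_set n J u"
  then obtain t where A: "A = xx u t" unfolding T_set_eq by auto
  show "A \<in> X"
  proof (cases "t = 0")
    case True thus ?thesis using A adm u unfolding admissible_def by simp
  next
    case False
    have fq: "Fq_closed n X" using adm unfolding admissible_def by blast
    have r: "is_tv_rep n s (\<mu> \<cdot>\<^sub>v u) (transpose_mat J *\<^sub>v u)" using xx_rep[OF u mu] s by simp
    have "t / \<mu> \<noteq> 0" using False mu by simp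
    hence "tv n ((t / \<mu>) \<cdot>\<^sub>v (\<mu> \<cdot>\<^sub>v u)) (transpose_mat J *\<^sub>v u) \<in> X"
      using fq s(1) r unfolding Fq_closed_def by blast
    moreover have "(t / \<mu>) \<cdot>\<^sub>v (\<mu> \<cdot>\<^sub>v u) = t \<cdot>\<^sub>v u" using mu by (simp add: smult_smult_assoc)
    ultimately show ?thesis using A unfolding xx_def by simp
  qed
qed

lemma X_elem: assumes adm: "admissible n J X" and s: "s \<in> X" "s \<noteq> 1\<^sub>m n"
  shows "\<exists>u \<mu>. u \<in> carrier_vec n \<and> u \<noteq> 0\<^sub>v n \<and> \<mu> \<noteq> 0 \<and> s = xx u \<mu> \<and> T_set n J u \<subseteq> X"
proof -
  have "s \<in> transvections n J" using adm s unfolding admissible_def by blast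
  then obtain u \<mu> where u: "u \<in> carrier_vec n" "u \<noteq> 0\<^sub>v n" "\<mu> \<noteq> 0" "s = xx u \<mu>"
    using trans_form by blast
  thus ?thesis using X_core[OF adm s(1) u(4) u(1,2) u(3)] by blast
qed

lemma Vpart_T: assumes adm: "admissible n J X" and u: "u \<in> V_part n X"
  shows "u \<in> carrier_vec n" "u \<noteq> 0\<^sub>v n" "T_set n J u \<subseteq> X"
proof -
  from u obtain s phi where s: "s \<in> X" "is_tv_rep n s u phi" unfolding V_part_def by blast
  have "s \<noteq> 1\<^sub>m n" using s tv_not_one by blast
  hence "s \<in> transvections n J" using adm s unfolding admissible_def by blast
  hence "s \<in> Sp n J" unfolding transvections_def by blast
  then obtain \<mu> where mu: "\<mu> \<noteq> 0" "s = xx u \<mu>" using transvection_form s by blast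
  show "u \<in> carrier_vec n" "u \<noteq> 0\<^sub>v n" using s unfolding is_tv_rep_def by auto
  thus "T_set n J u \<subseteq> X" using X_core[OF adm s(1) mu(2) _ _ mu(1)] by blast
qed

lemma pivot:
  assumes adm: "admissible n J X"
    and u: "u \<in> carrier_vec n" "u \<noteq> 0\<^sub>v n" and v: "v \<in> carrier_vec n" "v \<noteq> 0\<^sub>v n"
    and f: "ff u v = 0" and ind: "\<not> (\<exists>c. v = c \<cdot>\<^sub>v u)"
  shows "\<exists>w. w \<in> carrier_vec n \<and> w \<noteq> 0\<^sub>v n \<and> T_set n J w \<subseteq> X \<and> ff w u \<noteq> 0 \<and> ff w v \<noteq> 0"
proof -
  define X'' where "X'' = (X - {1\<^sub>m n}) \<union> {xx u 1, xx v 1}"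
  have sub: "X'' \<subseteq> transvections n J"
    using adm xx_transvection[OF u, of 1] xx_transvection[OF v, of 1]
    unfolding X''_def admissible_def by auto
  have d: "diam_le_2_gamma n X''" using adm sub unfolding admissible_def X''_def by blast
  have gs: "xx u 1 \<in> gamma_vertices n X''" unfolding gamma_vertices_def X''_def
    using xx_rep[OF u, of 1] by auto
  have gt: "xx v 1 \<in> gamma_vertices n X''" unfolding gamma_vertices_def X''_def
    using xx_rep[OF v, of 1] by auto
  have fvu: "ff v u = 0" using ff_skew[OF v(1) u(1)] f by simp
  have neq: "xx u 1 \<noteq> xx v 1"
  proof
    assume e: "xx u 1 = xx v 1"
    have "is_tv_rep n (xx u 1) (1 \<cdot>\<^sub>v v) (transpose_mat J *\<^sub>v v)" using xx_rep[OF v, of 1] e by simp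
    then obtain c where "1 \<cdot>\<^sub>v v = c \<cdot>\<^sub>v u" using rep_of_xx(1)[OF u(1)] by blast
    thus False using ind one_smult_vec by metis
  qed
  have noedge: "\<not> gamma_edge n (xx u 1) (xx v 1)" using edge_D[OF u(1) v(1)] fvu by blast
  from d gs gt neq noedge obtain W where W: "W \<in> gamma_vertices n X''"
    "gamma_edge n (xx u 1) W" "gamma_edge n W (xx v 1)"
    unfolding diam_le_2_gamma_def by blast
  have "W \<in> transvections n J" using W(1) sub unfolding gamma_vertices_def by blast
  then obtain w \<mu> where w: "w \<in> carrier_vec n" "w \<noteq> 0\<^sub>v n" "\<mu> \<noteq> 0" "W = xx w \<mu>"
    using trans_form by blast
  have e1: "ff w u \<noteq> 0" using edge_D[OF u(1) w(1)] W(2) w(4) by blast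
  have e2: "ff v w \<noteq> 0" using edge_D[OF w(1) v(1)] W(3) w(4) by blast
  hence e2': "ff w v \<noteq> 0" using ff_skew[OF v(1) w(1)] by auto
  have "W \<noteq> xx u 1"
  proof
    assume "W = xx u 1"
    hence "gamma_edge n (xx u 1) (xx u 1)" using W(2) by simp
    thus False using edge_D[OF u(1) u(1)] u by simp
  qed
  moreover have "W \<noteq> xx v 1"
  proof
    assume "W = xx v 1"
    hence "gamma_edge n (xx v 1) (xx v 1)" using W(3) by simp
    thus False using edge_D[OF v(1) v(1)] v by simp
  qed
  ultimately have "W \<in> X" using W(1) unfolding X''_def gamma_vertices_def by blast
  hence "T_set n J w \<subseteq> X" using X_core[OF adm _ w(4) w(1,2) w(3)] by blast
  thus ?thesis using w e1 e2' by blast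
qed




lemma sum17:
  assumes adm: "admissible n J X" and c3: "\<forall>x y::'a. \<exists>z. z \<noteq> x \<and> z \<noteq> y"
    and a: "a \<in> carrier_vec n" "a \<noteq> 0\<^sub>v n" and b: "b \<in> carrier_vec n" "b \<noteq> 0\<^sub>v n"
    and ab: "a + b \<noteq> 0\<^sub>v n" and T: "T_set n J a \<union> T_set n J b \<subseteq> X"
  shows "T_set n J (a + b) \<subseteq> setpow n (sym_gens n X) 17"
proof -
  let ?S = "sym_gens n X"
  have Xc: "X \<subseteq> carrier_mat n n" using adm unfolding admissible_def Sp_def by blast
  have Sc: "?S \<subseteq> carrier_mat n n" using sym_gens_carrier[OF Xc] .
  have mono: "T_set n J v \<subseteq> setpow n ?S k \<Longrightarrow> k \<le> k' \<Longrightarrow> T_set n J v \<subseteq> setpow n ?S k'" for v k k'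
    using setpow_mono[OF Sc sym_gens_one] by blast
  have X1: "Y \<subseteq> X \<Longrightarrow> Y \<subseteq> setpow n ?S 1" for Y
    using setpow_one[OF Sc] unfolding sym_gens_def by blast
  have Ca: "T_set n J a \<subseteq> setpow n ?S 1" and Cb: "T_set n J b \<subseteq> setpow n ?S 1" using X1 T by auto
  have add: "\<And>z v k1 k2 \<kappa> k. z \<in> carrier_vec n \<Longrightarrow> v \<in> carrier_vec n \<Longrightarrow> ff z v \<noteq> 0 \<Longrightarrow>
    T_set n J z \<subseteq> setpow n ?S k1 \<Longrightarrow> T_set n J v \<subseteq> setpow n ?S k2 \<Longrightarrow> k1 + k2 + k1 = k \<Longrightarrow>
    T_set n J (v + \<kappa> \<cdot>\<^sub>v z) \<subseteq> setpow n ?S k"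
    using ADD[OF Xc] by blast
  show ?thesis
  proof (cases "\<exists>c. b = c \<cdot>\<^sub>v a")
    case True
    then obtain c where c: "b = c \<cdot>\<^sub>v a" by blast
    have e: "a + b = (1 + c) \<cdot>\<^sub>v a" unfolding c using a by (intro eq_vecI) (auto simp: algebra_simps)
    have "1 + c \<noteq> 0"
    proof
      assume "1 + c = 0"
      hence "a + b = 0\<^sub>v n" unfolding e using a by (intro eq_vecI) auto
      thus False using ab by simp
    qed
    hence "T_set n J (a + b) = T_set n J a" unfolding e using T_scale[OF a(1)] by simp
    thus ?thesis using mono[OF Ca] by simp
  next
    case nd: False
    show ?thesis
    proof (cases "ff a b = 0")
      case False
      have "T_set n J (b + 1 \<cdot>\<^sub>v a) \<subseteq> setpow n ?S 17" using add[OF a(1) b(1) False Ca mono[OF Cb, of 15], of 17 1] by simp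
      moreover have "b + 1 \<cdot>\<^sub>v a = a + b" using a b by (intro eq_vecI) auto
      ultimately show ?thesis by simp
    next
      case fab: True
      have fba: "ff b a = 0" using ff_skew[OF b(1) a(1)] fab by simp
      obtain w where w: "w \<in> carrier_vec n" "w \<noteq> 0\<^sub>v n" "T_set n J w \<subseteq> X" "ff w a \<noteq> 0" "ff w b \<noteq> 0"
        using pivot[OF adm a b fab nd] by blast
      have abc: "a + b \<in> carrier_vec n" using a b by simp
      have nd2: "\<not> (\<exists>c. a + b = c \<cdot>\<^sub>v a)"
      proof
        assume "\<exists>c. a + b = c \<cdot>\<^sub>v a"
        then obtain c where ec: "a + b = c \<cdot>\<^sub>v a" by blast
        have "b = (c - 1) \<cdot>\<^sub>v a"
        proof (rule eq_vecI)
          fix i assume "i < dim_vec ((c - 1) \<cdot>\<^sub>v a)"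
          hence i: "i < n" using a by simp
          have "(a + b) $ i = (c \<cdot>\<^sub>v a) $ i" using ec by simp
          thus "b $ i = ((c - 1) \<cdot>\<^sub>v a) $ i" using a b i by (simp add: algebra_simps)
        qed (use a b in simp)
        thus False using nd by blast
      qed
      have faab: "ff a (a + b) = 0" using a b fab by simp
      obtain w' where w': "w' \<in> carrier_vec n" "w' \<noteq> 0\<^sub>v n" "T_set n J w' \<subseteq> X" "ff w' a \<noteq> 0" "ff w' (a + b) \<noteq> 0"
        using pivot[OF adm a abc ab faab nd2] by blast
      have Cw: "T_set n J w \<subseteq> setpow n ?S 1" and Cw': "T_set n J w' \<subseteq> setpow n ?S 1" using X1 w w' by auto
      obtain \<mu> where mu: "\<mu> \<noteq> 0" "ff w' (a + b) + \<mu> * ff w' w \<noteq> 0"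
        using choose_nonzero[OF c3 w'(5)] by blast
      define z where "z = a + \<mu> \<cdot>\<^sub>v w"
      have zc: "z \<in> carrier_vec n" unfolding z_def using a w by simp
      have Cz: "T_set n J z \<subseteq> setpow n ?S 3" unfolding z_def using add[OF w(1) a(1) w(4) Cw Ca, of 3 \<mu>] by simp
      have fzb: "ff z b = \<mu> * ff w b" unfolding z_def using a b w fab by simp
      have fbz: "ff b z \<noteq> 0" using ff_skew[OF b(1) zc] fzb mu w by simp
      define y where "y = z + 1 \<cdot>\<^sub>v b"
      have yc: "y \<in> carrier_vec n" unfolding y_def using zc b by simp
      have Cy: "T_set n J y \<subseteq> setpow n ?S 5" unfolding y_def using add[OF b(1) zc fbz Cb Cz, of 5 1] by simp
      have fw'y: "ff w' y \<noteq> 0"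
      proof -
        have "ff w' y = ff w' (a + b) + \<mu> * ff w' w" unfolding y_def z_def using a b w w' by simp
        thus ?thesis using mu by simp
      qed
      have fzb0: "ff z b \<noteq> 0" using fzb mu w by simp
      obtain \<kappa> where ka: "\<kappa> \<noteq> 0" "ff z b + \<kappa> * ff z w' \<noteq> 0"
        using choose_nonzero[OF c3 fzb0] by blast
      define y2 where "y2 = y + \<kappa> \<cdot>\<^sub>v w'"
      have y2c: "y2 \<in> carrier_vec n" unfolding y2_def using yc w' by simp
      have Cy2: "T_set n J y2 \<subseteq> setpow n ?S 7" unfolding y2_def using add[OF w'(1) yc fw'y Cw' Cy, of 7 \<kappa>] by simp
      have fzy2: "ff z y2 \<noteq> 0"
      proof -
        have "ff z y2 = ff z b + \<kappa> * ff z w'" unfolding y2_def y_def using zc b w' by simp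
        thus ?thesis using ka by simp
      qed
      define y3 where "y3 = b + \<kappa> \<cdot>\<^sub>v w'"
      have y3c: "y3 \<in> carrier_vec n" unfolding y3_def using b w' by simp
      have e3: "y2 + (-1) \<cdot>\<^sub>v z = y3" unfolding y3_def y2_def y_def using zc b w'
        by (intro eq_vecI) (auto simp: algebra_simps)
      have Cy3: "T_set n J y3 \<subseteq> setpow n ?S 13" using add[OF zc y2c fzy2 Cz Cy2, of 13 "-1"] e3 by simp
      have fay3: "ff a y3 \<noteq> 0"
      proof -
        have "ff a y3 = \<kappa> * ff a w'" unfolding y3_def using a b w' fab by simp
        moreover have "ff a w' \<noteq> 0" using ff_skew[OF a(1) w'(1)] w'(4) by simp
        ultimately show ?thesis using ka by simp
      qed
      define y4 where "y4 = y3 + 1 \<cdot>\<^sub>v a"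
      have y4c: "y4 \<in> carrier_vec n" unfolding y4_def using y3c a by simp
      have Cy4: "T_set n J y4 \<subseteq> setpow n ?S 15" unfolding y4_def using add[OF a(1) y3c fay3 Ca Cy3, of 15 1] by simp
      have fw'y4: "ff w' y4 \<noteq> 0"
      proof -
        have "ff w' y4 = ff w' (a + b)" unfolding y4_def y3_def using a b w' by simp
        thus ?thesis using w' by simp
      qed
      have e4: "y4 + (- \<kappa>) \<cdot>\<^sub>v w' = a + b" unfolding y4_def y3_def using a b w'
        by (intro eq_vecI) (auto simp: algebra_simps)
      have "T_set n J (y4 + (- \<kappa>) \<cdot>\<^sub>v w') \<subseteq> setpow n ?S 17"
        using add[OF w'(1) y4c fw'y4 Cw' Cy4, of 17] by simp
      thus ?thesis using e4 by simp
    qed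
  qed
qed




lemma adm_extend: assumes adm: "admissible n J X" and v: "v \<in> carrier_vec n" "v \<noteq> 0\<^sub>v n"
  shows "admissible n J (X \<union> T_set n J v)"
proof -
  let ?X' = "X \<union> T_set n J v"
  have P: "4 \<le> n" "alternating_form n J" "nondegenerate_form n J" "X \<subseteq> Sp n J" "1\<^sub>m n \<in> X"
    "X - {1\<^sub>m n} \<subseteq> transvections n J" "generates n J X" "Fq_closed n X"
    "spans n (V_part n X)" "spans n (Vdual_part n X)"
    "\<forall>X''. X - {1\<^sub>m n} \<subseteq> X'' \<and> X'' \<subseteq> transvections n J \<longrightarrow> diam_le_2_gamma n X''"
    using adm unfolding admissible_def by blast+
  have TSp: "T_set n J v \<subseteq> Sp n J" unfolding T_set_eq using xx_Sp[OF v(1)] by auto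
  have Ttr: "T_set n J v - {1\<^sub>m n} \<subseteq> transvections n J"
  proof
    fix A assume "A \<in> T_set n J v - {1\<^sub>m n}"
    then obtain t where "A = xx v t" "A \<noteq> 1\<^sub>m n" unfolding T_set_eq by auto
    moreover hence "t \<noteq> 0" using v by auto
    ultimately show "A \<in> transvections n J" using xx_transvection[OF v] by simp
  qed
  have Xc: "X \<subseteq> carrier_mat n n" using P(4) unfolding Sp_def by blast
  have gen: "generates n J ?X'"
  proof -
    have "setpow n (sym_gens n X) k \<subseteq> setpow n (sym_gens n ?X') k" for k
      by (rule setpow_mono_set) (rule sym_gens_mono, blast)
    hence "(\<Union>k. setpow n (sym_gens n X) k) \<subseteq> (\<Union>k. setpow n (sym_gens n ?X') k)"
      by (intro UN_mono) auto
    thus ?thesis using P(7) unfolding generates_def by (rule order_trans[rotated])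
  qed
  have fq: "Fq_closed n ?X'"
    unfolding Fq_closed_def
  proof (intro ballI allI impI)
    fix s u phi t assume s: "s \<in> ?X'" and r: "is_tv_rep n s u phi" and t: "(t::'a) \<noteq> 0"
    show "tv n (t \<cdot>\<^sub>v u) phi \<in> ?X'"
    proof (cases "s \<in> X")
      case True thus ?thesis using P(8) r t unfolding Fq_closed_def by blast
    next
      case False
      then obtain \<sigma> where s\<sigma>: "s = xx v \<sigma>" using s unfolding T_set_eq by auto
      have e: "tv n u phi = tv n (\<sigma> \<cdot>\<^sub>v v) (transpose_mat J *\<^sub>v v)" using r s\<sigma> unfolding is_tv_rep_def xx_def by simp
      have "tv n (t \<cdot>\<^sub>v u) phi = tv n (t \<cdot>\<^sub>v (\<sigma> \<cdot>\<^sub>v v)) (transpose_mat J *\<^sub>v v)"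
        by (rule tv_scale_eq[OF e]) (use r v in \<open>auto simp: is_tv_rep_def\<close>)
      also have "\<dots> = xx v (t * \<sigma>)" unfolding xx_def by (simp add: smult_smult_assoc)
      finally show ?thesis unfolding T_set_eq by auto
    qed
  qed
  have Vc: "V_part n ?X' \<subseteq> carrier_vec n" "Vdual_part n ?X' \<subseteq> carrier_vec n"
    unfolding V_part_def Vdual_part_def is_tv_rep_def by auto
  have "V_part n X \<subseteq> V_part n ?X'" "Vdual_part n X \<subseteq> Vdual_part n ?X'"
    unfolding V_part_def Vdual_part_def by blast+
  hence sp1: "spans n (V_part n ?X')" and sp2: "spans n (Vdual_part n ?X')"
    using spans_mono[OF P(9) _ Vc(1)] spans_mono[OF P(10) _ Vc(2)] by blast+
  have sub'': "?X' - {1\<^sub>m n} \<subseteq> transvections n J" using P(6) Ttr by blast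
  have "X - {1\<^sub>m n} \<subseteq> ?X' - {1\<^sub>m n}" by blast
  hence d: "diam_le_2_gamma n (?X' - {1\<^sub>m n})" using P(11)[rule_format, OF conjI, OF _ sub''] by blast
  have sc: "strongly_connected_gamma n ?X'" by (rule diam_strong[OF d gamma_vertices_minus_one[symmetric]])
  have dd: "\<forall>X''. ?X' - {1\<^sub>m n} \<subseteq> X'' \<and> X'' \<subseteq> transvections n J \<longrightarrow> diam_le_2_gamma n X''"
  proof (intro allI impI)
    fix X'' assume h: "?X' - {1\<^sub>m n} \<subseteq> X'' \<and> X'' \<subseteq> transvections n J"
    hence "X - {1\<^sub>m n} \<subseteq> X''" by blast
    thus "diam_le_2_gamma n X''" using P(11) h by blast
  qed
  have sp: "?X' \<subseteq> Sp n J" using P(4) TSp by blast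
  have one: "1\<^sub>m n \<in> ?X'" using P(5) by blast
  show ?thesis unfolding admissible_def using P(1-3) sp one sub'' gen fq sp1 sp2 sc dd by (intro conjI)
qed



lemma inv_xx: assumes v: "v \<in> carrier_vec n" and B: "B \<in> carrier_mat n n" and e: "xx v t * B = 1\<^sub>m n"
  shows "B = xx v (-t)"
proof -
  have "xx v (-t) = xx v (-t) * (xx v t * B)" using e by simp
  also have "\<dots> = (xx v (-t) * xx v t) * B" using assoc_mult_mat[OF xx_carrier xx_carrier B] by simp
  also have "\<dots> = B" using xx_add[OF v] v B by simp
  finally show ?thesis by simp
qed


lemma sub_cost: assumes adm: "admissible n J X"
  and v1: "v1 \<in> carrier_vec n" and v2: "v2 \<in> carrier_vec n"
  and L: "1 \<le> L" and c1: "T_set n J v1 \<subseteq> setpow n (sym_gens n X) L" and c2: "T_set n J v2 \<subseteq> setpow n (sym_gens n X) L"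
  shows "sym_gens n (X \<union> T_set n J v1 \<union> T_set n J v2) \<subseteq> setpow n (sym_gens n X) L"
proof -
  let ?S = "sym_gens n X"
  have Xc: "X \<subseteq> carrier_mat n n" using adm unfolding admissible_def Sp_def by blast
  have Sc: "?S \<subseteq> carrier_mat n n" using sym_gens_carrier[OF Xc] .
  have S1: "?S \<subseteq> setpow n ?S L" using setpow_one[OF Sc] setpow_mono[OF Sc sym_gens_one L] by blast
  have X1: "X \<subseteq> ?S" unfolding sym_gens_def by blast
  have I1: "inv_set n X \<subseteq> ?S" unfolding sym_gens_def by blast
  show ?thesis
  proof
    fix B assume "B \<in> sym_gens n (X \<union> T_set n J v1 \<union> T_set n J v2)"
    hence "B \<in> X \<or> B \<in> T_set n J v1 \<or> B \<in> T_set n J v2 \<or> B = 1\<^sub>m n \<or>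
      (B \<in> carrier_mat n n \<and> (\<exists>A \<in> X \<union> T_set n J v1 \<union> T_set n J v2. A * B = 1\<^sub>m n \<and> B * A = 1\<^sub>m n))"
      unfolding sym_gens_def inv_set_def by blast
    thus "B \<in> setpow n ?S L"
    proof (elim disjE)
      assume "B \<in> X" thus ?thesis using X1 S1 by blast
    next
      assume "B \<in> T_set n J v1" thus ?thesis using c1 by blast
    next
      assume "B \<in> T_set n J v2" thus ?thesis using c2 by blast
    next
      assume "B = 1\<^sub>m n" thus ?thesis using sym_gens_one S1 by blast
    next
      assume h: "B \<in> carrier_mat n n \<and> (\<exists>A \<in> X \<union> T_set n J v1 \<union> T_set n J v2. A * B = 1\<^sub>m n \<and> B * A = 1\<^sub>m n)"
      then obtain A where A: "A \<in> X \<union> T_set n J v1 \<union> T_set n J v2" "A * B = 1\<^sub>m n" "B * A = 1\<^sub>m n" by blast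
      show ?thesis
      proof (cases "A \<in> X")
        case True
        hence "B \<in> inv_set n X" using h A unfolding inv_set_def by blast
        thus ?thesis using I1 S1 by blast
      next
        case False
        hence "A \<in> T_set n J v1 \<or> A \<in> T_set n J v2" using A by blast
        thus ?thesis
        proof
          assume "A \<in> T_set n J v1"
          then obtain t where "A = xx v1 t" unfolding T_set_eq by auto
          hence "B = xx v1 (-t)" using inv_xx[OF v1] h A by blast
          thus ?thesis using c1 unfolding T_set_eq by blast
        next
          assume "A \<in> T_set n J v2"
          then obtain t where "A = xx v2 t" unfolding T_set_eq by auto
          hence "B = xx v2 (-t)" using inv_xx[OF v2] h A by blast
          thus ?thesis using c2 unfolding T_set_eq by blast
        qed
      qed
    qed
  qed
qed




lemma tree:
  assumes adm: "admissible n J X" and fin: "finite (UNIV :: 'a set)"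
    and sh: "sum_hyp TYPE('a) c" and c1: "1 \<le> c"
  shows "\<forall>B v. finite B \<longrightarrow> B \<subseteq> V_part n X \<longrightarrow> card B \<le> 2 ^ k \<longrightarrow>
    v \<in> module.span class_ring (module_vec TYPE('a) n) B \<longrightarrow> v \<noteq> 0\<^sub>v n \<longrightarrow>
    (\<exists>K. real K \<le> c ^ k \<and> T_set n J v \<subseteq> setpow n (sym_gens n X) K)"
proof -
  interpret vs: vec_space "TYPE('a)" n .
  let ?S = "sym_gens n X"
  have Xc: "X \<subseteq> carrier_mat n n" using adm unfolding admissible_def Sp_def by blast
  have Sc: "?S \<subseteq> carrier_mat n n" using sym_gens_carrier[OF Xc] .
  have mono: "T_set n J v \<subseteq> setpow n ?S K \<Longrightarrow> K \<le> K' \<Longrightarrow> T_set n J v \<subseteq> setpow n ?S K'" for v K K'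
    using setpow_mono[OF Sc sym_gens_one] by blast
  have X1: "X \<subseteq> setpow n ?S 1" using setpow_one[OF Sc] unfolding sym_gens_def by blast
  have Vc: "V_part n X \<subseteq> carrier_vec n" using Vpart_T(1)[OF adm] by blast
  show ?thesis
  proof (induction k)
    case 0
    show ?case
    proof (intro allI impI)
      fix B v assume B: "finite B" "B \<subseteq> V_part n X" "card B \<le> 2 ^ 0"
        and v: "v \<in> vs.span B" "v \<noteq> 0\<^sub>v n"
      have "\<forall>a1\<in>B. \<forall>a2\<in>B. a1 = a2" using B card_le_Suc0_iff_eq[OF B(1)] by simp
      hence "B = {} \<or> (\<exists>b. B = {b})" by blast
      thus "\<exists>K. real K \<le> c ^ 0 \<and> T_set n J v \<subseteq> setpow n ?S K"
      proof
        assume "B = {}" thus ?thesis using v vs.span_empty_vec by blast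
      next
        assume "\<exists>b. B = {b}"
        then obtain b where b: "B = {b}" by blast
        have bV: "b \<in> V_part n X" using B b by blast
        have bc: "b \<in> carrier_vec n" using Vpart_T(1)[OF adm bV] .
        obtain lam where l: "v = lam \<cdot>\<^sub>v b" using vs.span_single[OF bc] v b by blast
        have "lam \<noteq> 0" using l v bc by auto
        hence "T_set n J v = T_set n J b" using T_scale[OF bc] l by simp
        hence "T_set n J v \<subseteq> setpow n ?S 1" using Vpart_T(3)[OF adm bV] X1 by blast
        thus ?thesis by (intro exI[of _ 1]) simp
      qed
    qed
  next
    case (Suc k)
    show ?case
    proof (intro allI impI)
      fix B v assume B: "finite B" "B \<subseteq> V_part n X" "card B \<le> 2 ^ Suc k"
        and v: "v \<in> vs.span B" "v \<noteq> 0\<^sub>v n"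
      have ck: "1 \<le> c ^ k" using c1 by simp
      have ck1: "c ^ k \<le> c ^ Suc k" using c1 by (simp add: mult_le_cancel_right1)
      obtain B1 where B1: "B1 \<subseteq> B" "card B1 = card B div 2" "finite B1"
        using obtain_subset_with_card_n[of "card B div 2" B] by auto
      define B2 where "B2 = B - B1"
      have B2: "finite B2" "B2 \<subseteq> B" "card B2 = card B - card B div 2"
        unfolding B2_def using B1 B card_Diff_subset[OF B1(3) B1(1)] by auto
      have cB1: "card B1 \<le> 2 ^ k" using B1 B by simp
      have cB2: "card B2 \<le> 2 ^ k" using B2 B by simp
      have un: "B = B1 \<union> B2" "B1 \<inter> B2 = {}" unfolding B2_def using B1 by auto
      have "B1 \<union> B2 \<subseteq> carrier_vec n" using un B Vc by auto
      moreover have "v \<in> vs.span (B1 \<union> B2)" using un v by simp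
      ultimately obtain v1 v2 where vv: "v1 \<in> vs.span B1" "v2 \<in> vs.span B2" "v = v1 + v2"
        using vs.span_split[of B1 B2 v] B1(3) B2(1) un(2) by blast
      have B1V: "B1 \<subseteq> V_part n X" and B2V: "B2 \<subseteq> V_part n X" using B1 B2 B by auto
      have v1c: "v1 \<in> carrier_vec n" using vs.span_is_subset2[of B1] B1V Vc vv by auto
      have v2c: "v2 \<in> carrier_vec n" using vs.span_is_subset2[of B2] B2V Vc vv by auto
      show "\<exists>K. real K \<le> c ^ Suc k \<and> T_set n J v \<subseteq> setpow n ?S K"
      proof (cases "v1 = 0\<^sub>v n")
        case True
        hence "v = v2" using vv v2c by simp
        then obtain K where "real K \<le> c ^ k" "T_set n J v \<subseteq> setpow n ?S K"
          using Suc[rule_format, OF B2(1) B2V cB2 vv(2)] v by blast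
        thus ?thesis using ck1 by (intro exI[of _ K]) simp
      next
        case n1: False
        show ?thesis
        proof (cases "v2 = 0\<^sub>v n")
          case True
          hence "v = v1" using vv v1c by simp
          then obtain K where "real K \<le> c ^ k" "T_set n J v \<subseteq> setpow n ?S K"
            using Suc[rule_format, OF B1(3) B1V cB1 vv(1)] v by blast
          thus ?thesis using ck1 by (intro exI[of _ K]) simp
        next
          case n2: False
          obtain K1 where K1: "real K1 \<le> c ^ k" "T_set n J v1 \<subseteq> setpow n ?S K1"
            using Suc[rule_format, OF B1(3) B1V cB1 vv(1) n1] by blast
          obtain K2 where K2: "real K2 \<le> c ^ k" "T_set n J v2 \<subseteq> setpow n ?S K2"
            using Suc[rule_format, OF B2(1) B2V cB2 vv(2) n2] by blast
          define L where "L = max 1 (max K1 K2)"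
          have L: "1 \<le> L" "real L \<le> c ^ k" unfolding L_def using K1 K2 ck by auto
          have C1: "T_set n J v1 \<subseteq> setpow n ?S L" using mono[OF K1(2)] unfolding L_def by simp
          have C2: "T_set n J v2 \<subseteq> setpow n ?S L" using mono[OF K2(2)] unfolding L_def by simp
          define X' where "X' = X \<union> T_set n J v1 \<union> T_set n J v2"
          have adm': "admissible n J X'" unfolding X'_def
            using adm_extend[OF adm_extend[OF adm v1c n1] v2c n2] .
          have "T_set n J v1 \<union> T_set n J v2 \<subseteq> X'" unfolding X'_def by blast
          hence wl: "real (word_len n X' (T_set n J (v1 + v2))) \<le> c"
            using sh adm' v1c v2c n1 n2 v vv unfolding sum_hyp_def by blast
          have X'c: "X' \<subseteq> carrier_mat n n" using adm' unfolding admissible_def Sp_def by blast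
          have gen': "generates n J X'" using adm' unfolding admissible_def by blast
          have finT: "finite (T_set n J (v1 + v2))" unfolding T_set_eq using fin by simp
          have TSp: "T_set n J (v1 + v2) \<subseteq> Sp n J" unfolding T_set_eq using xx_Sp v1c v2c by auto
          obtain k0 where "T_set n J (v1 + v2) \<subseteq> setpow n (sym_gens n X') k0"
            using finite_exists_len[OF X'c gen' finT TSp] by blast
          hence T1: "T_set n J (v1 + v2) \<subseteq> setpow n (sym_gens n X') (word_len n X' (T_set n J (v1 + v2)))"
            by (rule word_len_ex)
          have sub: "sym_gens n X' \<subseteq> setpow n ?S L" unfolding X'_def by (rule sub_cost[OF adm v1c v2c L(1) C1 C2])
          define m where "m = word_len n X' (T_set n J (v1 + v2))"
          have "T_set n J v \<subseteq> setpow n ?S (m * L)"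
            using T1 setpow_subst[OF Sc sub, of m] vv unfolding m_def by blast
          moreover have "real (m * L) \<le> c ^ Suc k"
          proof -
            have "real (m * L) = real m * real L" by simp
            also have "\<dots> \<le> c * c ^ k" using wl L c1 unfolding m_def by (intro mult_mono) auto
            finally show ?thesis by simp
          qed
          ultimately show ?thesis by blast
        qed
      qed
    qed
  qed
qed


end


lemma powr_log_swap: assumes c: "(c::real) > 0" and x: "x > 0"
  shows "c powr (log 2 x) = x powr (log 2 c)"
  using c x by (simp add: powr_def log_def mult.commute)

lemma log17: "log 2 (17::real) \<le> 4.4"
proof (rule ccontr)
  assume "\<not> log 2 (17::real) \<le> 4.4"
  hence "4.4 < log 2 (17::real)" by simp
  hence "2 powr (4.4::real) < 2 powr (log 2 17)" by (intro powr_less_mono) auto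
  hence "2 powr (4.4::real) < 17" by simp
  hence "(2 powr (4.4::real)) ^ 5 < 17 ^ 5" by (intro power_strict_mono) auto
  moreover have "(2 powr (4.4::real)) ^ 5 = 2 powr (4.4 * 5)"
    by (simp add: powr_realpow[symmetric] powr_powr)
  moreover have "(2::real) powr (4.4 * 5) = 2 ^ 22"
    by (simp add: powr_realpow[symmetric])
  ultimately show False by simp
qed

lemma card_ge3: assumes "odd (CARD('a::{finite,field}))"
  shows "\<forall>x y::'a. \<exists>z. z \<noteq> x \<and> z \<noteq> y"
proof (intro allI)
  fix x y :: 'a
  have "card {0::'a, 1} = 2" by simp
  hence "2 \<le> CARD('a)" by (metis card_mono finite subset_UNIV)
  hence c3: "3 \<le> CARD('a)" using assms by presburger
  have "card {x, y} \<le> 2" by (simp add: card_insert_le_m1)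
  hence "{x, y} \<noteq> UNIV" using c3 by auto
  thus "\<exists>z. z \<noteq> x \<and> z \<noteq> y" by blast
qed

theorem theorem4p17:
  fixes J :: "'a::{finite, field} mat" and X :: "'a mat set" and n :: nat
  assumes "odd (CARD('a))" and "CARD('a) \<noteq> 9"
    and "admissible n J X"
  shows "(\<forall>c::real. c \<ge> 1 \<longrightarrow> sum_hyp TYPE('a) c \<longrightarrow>
            real (word_len n X (transvections n J)) \<le> c * real n powr log 2 c)
       \<and> real (word_len n X (transvections n J)) \<le> 21 * real n powr 4.4"
proof -
  have adm: "admissible n J X" by fact
  interpret sform n J using adm unfolding admissible_def sform_def by blast
  interpret vs: vec_space "TYPE('a)" n .
  have n4: "4 \<le> n" using adm unfolding admissible_def by blast
  have fin: "finite (UNIV :: 'a set)" by simp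
  let ?S = "sym_gens n X"
  have Xc: "X \<subseteq> carrier_mat n n" using adm unfolding admissible_def Sp_def by blast
  have Sc: "?S \<subseteq> carrier_mat n n" using sym_gens_carrier[OF Xc] .
  have Vc: "V_part n X \<subseteq> carrier_vec n" using Vpart_T(1)[OF adm] by blast
  have spV: "vs.span (V_part n X) = carrier_vec n" using adm unfolding admissible_def spans_def by blast
  have main: "real (word_len n X (transvections n J)) \<le> c * real n powr log 2 c"
    if c1: "1 \<le> c" and sh: "sum_hyp TYPE('a) c" for c
  proof -
    define k where "k = nat \<lceil>log 2 (real n)\<rceil>"
    have lpos: "0 < log 2 (real n)" using n4 by simp
    have kr: "real k = real_of_int \<lceil>log 2 (real n)\<rceil>" unfolding k_def using lpos by simp
    have nk: "real n \<le> 2 ^ k"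
    proof -
      have "real n = 2 powr (log 2 (real n))" using n4 by simp
      also have "\<dots> \<le> 2 powr (real k)" unfolding kr by (intro powr_mono) auto
      also have "\<dots> = 2 ^ k" by (simp add: powr_realpow)
      finally show ?thesis .
    qed
    hence nk': "n \<le> 2 ^ k" by (metis of_nat_le_iff of_nat_numeral of_nat_power)
    define K0 where "K0 = nat \<lfloor>c ^ k\<rfloor>"
    have sub: "transvections n J \<subseteq> setpow n ?S K0"
    proof
      fix s assume "s \<in> transvections n J"
      then obtain u \<mu> where u: "u \<in> carrier_vec n" "u \<noteq> 0\<^sub>v n" "s = xx u \<mu>"
        using trans_form by blast
      have "u \<in> vs.span (V_part n X)" using spV u by simp
      then obtain B where B: "B \<subseteq> V_part n X" "finite B" "card B \<le> n" "u \<in> vs.span B"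
        using vs.span_small[OF Vc] by blast
      have cB: "card B \<le> 2 ^ k" using B nk' by simp
      obtain K where K: "real K \<le> c ^ k" "T_set n J u \<subseteq> setpow n ?S K"
        using tree[OF adm fin sh c1, where k=k, rule_format, OF B(2) B(1) cB B(4) u(2)] by blast
      have "K \<le> K0" unfolding K0_def using K(1) by (simp add: le_nat_floor)
      hence "setpow n ?S K \<subseteq> setpow n ?S K0" using setpow_mono[OF Sc sym_gens_one] by blast
      moreover have "s \<in> T_set n J u" using u unfolding T_set_eq by simp
      ultimately show "s \<in> setpow n ?S K0" using K by blast
    qed
    have "real (word_len n X (transvections n J)) \<le> real K0" using word_len_le[OF sub] by simp
    also have "\<dots> \<le> c ^ k" unfolding K0_def using c1 by simp
    also have "c ^ k = c powr real k" using c1 by (simp add: powr_realpow)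
    also have "\<dots> \<le> c powr (log 2 (real n) + 1)"
      using c1 unfolding kr by (intro powr_mono) (linarith, simp)
    also have "\<dots> = c * c powr (log 2 (real n))" using c1 by (simp add: powr_add)
    also have "c powr (log 2 (real n)) = real n powr log 2 c" using c1 n4 by (intro powr_log_swap) auto
    finally show ?thesis .
  qed
  have sh17: "sum_hyp TYPE('a) 17"
    unfolding sum_hyp_def
  proof (intro allI impI ballI)
    fix n' :: nat and J' :: "'a mat" and X' a b
    assume adm': "admissible n' J' X'" and a: "a \<in> carrier_vec n'" and b: "b \<in> carrier_vec n'"
      and an: "a \<noteq> 0\<^sub>v n'" and bn: "b \<noteq> 0\<^sub>v n'" and abn: "a + b \<noteq> 0\<^sub>v n'"
      and T: "T_set n' J' a \<union> T_set n' J' b \<subseteq> X'"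
    have sf: "sform n' J'" using adm' unfolding admissible_def sform_def by blast
    have "T_set n' J' (a + b) \<subseteq> setpow n' (sym_gens n' X') 17"
      using sform.sum17[OF sf adm' card_ge3[OF assms(1)] a an b bn abn T] .
    thus "real (word_len n' X' (T_set n' J' (a + b))) \<le> 17" using word_len_le[of "T_set n' J' (a + b)" n' X' 17] by simp
  qed
  have "real (word_len n X (transvections n J)) \<le> 17 * real n powr log 2 17"
    using main[OF _ sh17] by simp
  also have "\<dots> \<le> 21 * real n powr 4.4"
  proof -
    have "real n powr log 2 17 \<le> real n powr 4.4" using n4 log17 by (intro powr_mono) auto
    thus ?thesis by (intro mult_mono) auto
  qed
  finally show ?thesis using main by blast
qed

end
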